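(* Let $p$ be an odd prime, $n$ a positive integer with $\gcd(n,p)=1$, $\eta$ a root of an irreducible quadratic over $\mathbb{F}_p$, and let $\mathcal{C}(S)$ be a linear negacyclic quantum stabilizer code associated to a totally isotropic subspace $S\subseteq\mathbb{F}_p^n\times\mathbb{F}_p^n$ (so the image of $S^\perp$ in $\mathcal{R}(\eta)=\mathbb{F}_p(\eta)[X]/\langle X^n+1\rangle$ is an ideal). If the BCH distance of $\mathcal{C}(S)$ is $d$, then the minimum distance of $\mathcal{C}(S)$ is at least $d$.
   Context: $\mathbb{F}_p^n\times\mathbb{F}_p^n$ is identified with $\mathbb{F}_{p^2}^n=\mathbb{F}_p(\eta)^n$ by $(\mathbf{a},\mathbf{b})\mapsto\mathbf{a}+\eta\mathbf{b}$, and vectors with polynomials $\sum a_iX^i$ modulo $X^n+1$. The symplectic inner product is $\langle(\mathbf{a},\mathbf{b}),(\mathbf{c},\mathbf{d})\rangle_s=\mathbf{a}^T\mathbf{d}-\mathbf{b}^T\mathbf{c}$, $S^\perp$ is the symplectic dual. $\mathcal{C}(S)$ is linear if the image of $S$ is an $\mathbb{F}_{p^2}$-subspace, and negacyclic if $S$ is closed under $(\mathbf{a},\mathbf{b})\mapsto(N\mathbf{a},N\mathbf{b})$ with $N(u_0,\dots,u_{n-1})=(-u_{n-1},u_0,\dots,u_{n-2})$. The joint weight of $(\mathbf{a},\mathbf{b})$ is $\#\{j:(a_j,b_j)\neq(0,0)\}$; the minimum distance of $\mathcal{C}(S)$ is the minimum joint weight of elements of $S^\perp\setminus S$. For $q=p^k$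 and a factor $f$ of $X^n+1$ over $\mathbb{F}_q$, the BCH distance of $f$ is the largest integer $d$ such that $\beta^{\ell},\beta^{\ell+2},\dots,\beta^{\ell+2(d-2)}$ are roots of $f$ for some odd $\ell\in\{1,3,\dots,2n-1\}$ and some primitive $2n$-th root of unity $\beta$ (in an extension of $\mathbb{F}_q$). The BCH distance of the linear code $\mathcal{C}(S)$ is the BCH distance of the monic generator polynomial of the ideal $S^\perp$ of $\mathcal{R}(\eta)$. *)

theory Defs
  imports "HOL-Computational_Algebra.Polynomial"
begin

text \<open>We work inside an ambient field 'e of characteristic p.  The prime field
  F_p is its prime subfield, F_{p^2} = F_p(eta) is the set of elements a + eta*b
  with a, b in F_p.\<close>

definition Fp :: "'a::semiring_1 set" where
  "Fp = range of_nat"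

definition Fq :: "'a::field \<Rightarrow> 'a set" where
  "Fq eta = {a + eta * b | a b. a \<in> Fp \<and> b \<in> Fp}"

definition poly_over :: "'a::zero set \<Rightarrow> 'a poly \<Rightarrow> bool" where
  "poly_over K f \<longleftrightarrow> (\<forall>i. coeff f i \<in> K)"

definition irreducible_over :: "'a::field set \<Rightarrow> 'a poly \<Rightarrow> bool" where
  "irreducible_over K q \<longleftrightarrow> poly_over K q \<and> degree q \<ge> 1 \<and>
     (\<forall>a b. poly_over K a \<and> poly_over K b \<and> q = a * b \<longrightarrow> degree a = 0 \<or> degree b = 0)"

definition vecs :: "nat \<Rightarrow> (nat \<Rightarrow> 'a::field) set" where
  "vecs n = {a. (\<forall>i<n. a i \<in> Fp) \<and> (\<forall>i\<ge>n. a i = 0)}"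

definition symp :: "nat \<Rightarrow> (nat \<Rightarrow> 'a::field) \<times> (nat \<Rightarrow> 'a) \<Rightarrow> (nat \<Rightarrow> 'a) \<times> (nat \<Rightarrow> 'a) \<Rightarrow> 'a" where
  "symp n u v = (\<Sum>i<n. fst u i * snd v i) - (\<Sum>i<n. snd u i * fst v i)"

definition subspace_Fp :: "nat \<Rightarrow> ((nat \<Rightarrow> 'a::field) \<times> (nat \<Rightarrow> 'a)) set \<Rightarrow> bool" where
  "subspace_Fp n S \<longleftrightarrow> S \<subseteq> vecs n \<times> vecs n \<and> ((\<lambda>i. 0), (\<lambda>i. 0)) \<in> S \<and>
     (\<forall>u\<in>S. \<forall>v\<in>S. ((\<lambda>i. fst u i + fst v i), (\<lambda>i. snd u i + snd v i)) \<in> S) \<and>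
     (\<forall>c\<in>Fp. \<forall>u\<in>S. ((\<lambda>i. c * fst u i), (\<lambda>i. c * snd u i)) \<in> S)"

definition symp_dual :: "nat \<Rightarrow> ((nat \<Rightarrow> 'a::field) \<times> (nat \<Rightarrow> 'a)) set \<Rightarrow> ((nat \<Rightarrow> 'a) \<times> (nat \<Rightarrow> 'a)) set" where
  "symp_dual n S = {v \<in> vecs n \<times> vecs n. \<forall>u\<in>S. symp n v u = 0}"

definition totally_isotropic :: "nat \<Rightarrow> ((nat \<Rightarrow> 'a::field) \<times> (nat \<Rightarrow> 'a)) set \<Rightarrow> bool" where
  "totally_isotropic n S \<longleftrightarrow> S \<subseteq> symp_dual n S"

definition embed :: "'a::field \<Rightarrow> (nat \<Rightarrow> 'a) \<times> (nat \<Rightarrow> 'a) \<Rightarrow> nat \<Rightarrow> 'a" where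
  "embed eta u = (\<lambda>i. fst u i + eta * snd u i)"

definition is_linear_code :: "'a::field \<Rightarrow> ((nat \<Rightarrow> 'a) \<times> (nat \<Rightarrow> 'a)) set \<Rightarrow> bool" where
  "is_linear_code eta S \<longleftrightarrow>
     (\<lambda>i. 0) \<in> embed eta ` S \<and>
     (\<forall>x\<in>embed eta ` S. \<forall>y\<in>embed eta ` S. (\<lambda>i. x i + y i) \<in> embed eta ` S) \<and>
     (\<forall>c\<in>Fq eta. \<forall>x\<in>embed eta ` S. (\<lambda>i. c * x i) \<in> embed eta ` S)"

definition negashift :: "nat \<Rightarrow> (nat \<Rightarrow> 'a::ring) \<Rightarrow> nat \<Rightarrow> 'a" where
  "negashift n u = (\<lambda>i. if i = 0 then - u (n - 1) else if i < n then u (i - 1) else 0)"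

definition is_negacyclic :: "nat \<Rightarrow> ((nat \<Rightarrow> 'a::ring) \<times> (nat \<Rightarrow> 'a)) set \<Rightarrow> bool" where
  "is_negacyclic n S \<longleftrightarrow> (\<forall>u\<in>S. (negashift n (fst u), negashift n (snd u)) \<in> S)"

definition vpoly :: "nat \<Rightarrow> (nat \<Rightarrow> 'a::comm_monoid_add) \<Rightarrow> 'a poly" where
  "vpoly n w = (\<Sum>i<n. monom (w i) i)"

text \<open>Image of S^perp in R(eta), with elements represented by their reduced
  polynomials (degree < n).\<close>
definition dual_polys :: "'a::field \<Rightarrow> nat \<Rightarrow> ((nat \<Rightarrow> 'a) \<times> (nat \<Rightarrow> 'a)) set \<Rightarrow> 'a poly set" where
  "dual_polys eta n S = vpoly n ` embed eta ` symp_dual n S"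

definition is_generator_poly :: "'a::field \<Rightarrow> nat \<Rightarrow> 'a poly set \<Rightarrow> 'a poly \<Rightarrow> bool" where
  "is_generator_poly eta n I g \<longleftrightarrow> lead_coeff g = 1 \<and> poly_over (Fq eta) g \<and>
     g dvd (monom 1 n + 1) \<and>
     I = {h. poly_over (Fq eta) h \<and> degree h < n \<and> g dvd h}"

definition primitive_root_of_unity :: "nat \<Rightarrow> 'a::field \<Rightarrow> bool" where
  "primitive_root_of_unity m b \<longleftrightarrow> b ^ m = 1 \<and> (\<forall>k. 0 < k \<and> k < m \<longrightarrow> b ^ k \<noteq> 1)"

definition bch_ok :: "nat \<Rightarrow> 'a::field poly \<Rightarrow> nat \<Rightarrow> bool" where
  "bch_ok n f d \<longleftrightarrow> (\<exists>l b. odd l \<and> 1 \<le> l \<and> l \<le> 2 * n - 1 \<and> primitive_root_of_unity (2 * n) b \<and>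
       (\<forall>j. j + 1 < d \<longrightarrow> poly f (b ^ (l + 2 * j)) = 0))"

definition is_bch_distance :: "nat \<Rightarrow> 'a::field poly \<Rightarrow> nat \<Rightarrow> bool" where
  "is_bch_distance n f d \<longleftrightarrow> bch_ok n f d \<and> (\<forall>d'. bch_ok n f d' \<longrightarrow> d' \<le> d)"

definition joint_weight :: "nat \<Rightarrow> (nat \<Rightarrow> 'a::zero) \<times> (nat \<Rightarrow> 'a) \<Rightarrow> nat" where
  "joint_weight n u = card {j. j < n \<and> (fst u j \<noteq> 0 \<or> snd u j \<noteq> 0)}"

end

theory Submission imports Defs begin

lemma vander0:
  fixes z y :: "nat \<Rightarrow> 'e::field"
  assumes fin: "finite K" and inj: "inj_on z K"
    and eq: "\<forall>j<card K. (\<Sum>i\<in>K. y i * z i ^ j) = 0" and i0: "i0 \<in> K"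
  shows "y i0 = 0"
proof -
  define q where "q = (\<Prod>i\<in>K-{i0}. [:- z i, 1:])"
  have "degree q \<le> (\<Sum>i\<in>K-{i0}. degree [:- z i, 1:])"
    unfolding q_def using degree_prod_sum_le[of "K-{i0}" "\<lambda>i. [:- z i, 1:]"] fin by (simp add: o_def)
  also have "\<dots> = card (K - {i0})" by simp
  also have "\<dots> < card K" using fin i0 by (rule card_Diff1_less)
  finally have dq: "degree q < card K" .
  have pq: "\<And>x. poly q x = (\<Prod>i\<in>K-{i0}. x - z i)" unfolding q_def by (simp add: poly_prod)
  have "(\<Sum>i\<in>K. y i * poly q (z i)) = (\<Sum>i\<in>K. y i * (\<Sum>j\<le>degree q. coeff q j * z i ^ j))"
    by (simp add: poly_altdef)
  also have "\<dots> = (\<Sum>j\<le>degree q. coeff q j * (\<Sum>i\<in>K. y i * z i ^ j))"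
    unfolding sum_distrib_left by (subst sum.swap) (simp add: mult_ac)
  also have "\<dots> = 0" using eq dq by (auto intro!: sum.neutral)
  finally have s0: "(\<Sum>i\<in>K. y i * poly q (z i)) = 0" .
  have "(\<Sum>i\<in>K. y i * poly q (z i)) = y i0 * poly q (z i0) + (\<Sum>i\<in>K-{i0}. y i * poly q (z i))"
    using fin i0 by (simp add: sum.remove)
  also have "(\<Sum>i\<in>K-{i0}. y i * poly q (z i)) = 0"
    using fin by (auto intro!: sum.neutral simp: pq)
  finally have "y i0 * poly q (z i0) = 0" using s0 by simp
  moreover have "poly q (z i0) \<noteq> 0"
    unfolding pq using fin inj i0 by (auto simp: inj_on_def)
  ultimately show ?thesis by simp
qed

lemma Fp_add: "a \<in> Fp \<Longrightarrow> b \<in> Fp \<Longrightarrow> a + b \<in> Fp"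
  unfolding Fp_def by (auto intro: range_eqI[of _ _ "_ + _"] simp del: of_nat_add simp: of_nat_add[symmetric])
lemma Fp_mult: "a \<in> Fp \<Longrightarrow> b \<in> Fp \<Longrightarrow> a * b \<in> Fp"
  unfolding Fp_def by (auto intro: range_eqI[of _ _ "_ * _"] simp del: of_nat_mult simp: of_nat_mult[symmetric])
lemma Fp_0: "0 \<in> Fp" and Fp_1: "1 \<in> Fp"
  unfolding Fp_def by (metis of_nat_0 rangeI, metis of_nat_1 rangeI)

context
  fixes p :: nat
  assumes p0: "p > 0" and cp: "of_nat p = (0::'e::field)"
begin

lemma Fp_neg: "(a::'e) \<in> Fp \<Longrightarrow> - a \<in> Fp"
proof -
  assume "a \<in> Fp"
  then obtain k where a: "a = of_nat k" unfolding Fp_def by auto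
  have "k + (p-1)*k = p*k" using p0 by (cases p) auto
  then have "a + of_nat ((p-1)*k) = of_nat (p * k)" unfolding a by (metis of_nat_add)
  also have "\<dots> = 0" using cp by simp
  finally have "- a = of_nat ((p-1)*k)" by (simp only: neg_eq_iff_add_eq_0)
  thus ?thesis unfolding Fp_def by (metis rangeI)
qed

lemma Fp_finite: "Fp = (of_nat ` {..<p} :: 'e set)"
proof
  show "Fp \<subseteq> (of_nat ` {..<p} :: 'e set)"
  proof
    fix x :: 'e assume "x \<in> Fp"
    then obtain k where x: "x = of_nat k" unfolding Fp_def by auto
    have "x = of_nat (p * (k div p) + k mod p)" unfolding x by simp
    also have "\<dots> = of_nat (k mod p)" by (simp only: of_nat_add of_nat_mult cp) simp
    finally show "x \<in> of_nat ` {..<p}" using p0 by auto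
  qed
qed (auto simp: Fp_def)

lemma Fp_inv: assumes "(b::'e) \<in> Fp" "b \<noteq> 0" shows "\<exists>c\<in>Fp. b * c = 1"
proof -
  have fin: "finite (Fp::'e set)" by (metis Fp_finite finite_imageI finite_lessThan)
  have "(\<lambda>x. b * x) ` Fp = Fp"
    by (rule endo_inj_surj[OF fin]) (use assms Fp_mult in \<open>auto simp: inj_on_def\<close>)
  then have "1 \<in> (\<lambda>x. b * x) ` Fp" using Fp_1 by simp
  thus ?thesis by auto
qed

end

lemma poly_over_lin: "x \<in> Fp \<Longrightarrow> poly_over Fp [:x, 1:]"
  unfolding poly_over_def by (auto simp: coeff_pCons Fp_0 Fp_1 split: nat.split)

lemma quad_fac: "[:- (e * (c + e)), c, 1:] = [:- e, 1:] * [:c + (e::'e::field), 1:]"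
  by (simp add: mult_pCons_left algebra_simps)

lemma eta_not_Fp:
  fixes eta :: "'e::field"
  assumes p0: "p > 0" and cp: "of_nat p = (0::'e)"
    and c0: "c0 \<in> Fp" and c1: "c1 \<in> Fp" and irr: "irreducible_over Fp [:c0, c1, 1:]"
    and root: "poly [:c0, c1, 1:] eta = 0"
    and a: "a \<in> Fp" and b: "b \<in> Fp" and ab: "a + eta * b = 0"
  shows "a = 0 \<and> b = 0"
proof (cases "b = 0")
  case True then show ?thesis using ab by simp
next
  case False
  obtain c where c: "c \<in> Fp" "b * c = 1" using Fp_inv[OF p0 cp b False] by auto
  have "a * c + eta * (b * c) = 0" using ab by (simp add: distrib_right[symmetric] mult.assoc[symmetric])
  then have "eta + a * c = 0" using c(2) by (simp add: add.commute)
  then have e: "eta = - (a * c)" by (simp add: eq_neg_iff_add_eq_0)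
  have eF: "eta \<in> Fp" unfolding e by (rule Fp_neg[OF p0 cp], rule Fp_mult[OF a c(1)])
  have r: "c0 + eta * (c1 + eta) = 0" using root by simp
  have c0e: "c0 = - (eta * (c1 + eta))" using r by (simp add: eq_neg_iff_add_eq_0)
  have fac: "[:c0, c1, 1:] = [:- eta, 1:] * [:c1 + eta, 1:]"
    using quad_fac[of eta c1] c0e by simp
  have irr': "\<forall>a b. poly_over Fp a \<and> poly_over Fp b \<and> [:c0, c1, 1:] = a * b \<longrightarrow> degree a = 0 \<or> degree b = 0"
    by (rule conjunct2[OF conjunct2[OF irr[unfolded irreducible_over_def]]])
  have "degree [:- eta, 1:] = 0 \<or> degree [:c1 + eta, 1:] = 0"
    by (rule irr'[rule_format, OF conjI[OF poly_over_lin[OF Fp_neg[OF p0 cp eF]] conjI[OF poly_over_lin[OF Fp_add[OF c1 eF]] fac]]])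
  then show ?thesis by simp
qed


lemma root_pow_ne:
  fixes b :: "'e::field"
  assumes pr: "primitive_root_of_unity (2 * n) b" and ii: "i < i'" "i' < n"
  shows "b ^ (2 * i) \<noteq> b ^ (2 * i')"
proof
  assume h: "b ^ (2 * i) = b ^ (2 * i')"
  have b0: "b \<noteq> 0"
  proof
    assume "b = 0" then show False using pr ii by (simp add: primitive_root_of_unity_def power_0_left)
  qed
  have "2 * i' = 2 * i + 2 * (i' - i)" using ii by simp
  then have "b ^ (2 * i') = b ^ (2 * i) * b ^ (2 * (i' - i))" by (metis power_add)
  then have "b ^ (2 * (i' - i)) = 1" using h b0 by simp
  moreover have "0 < 2 * (i' - i)" "2 * (i' - i) < 2 * n" using ii by auto
  ultimately show False using pr unfolding primitive_root_of_unity_def by blast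
qed

theorem mainTheorem12:
  fixes p n d :: nat and eta :: "'e::field"
    and S :: "((nat \<Rightarrow> 'e) \<times> (nat \<Rightarrow> 'e)) set" and g :: "'e poly"
  assumes "prime p" and "odd p" and "n > 0" and "coprime n p"
    and "of_nat p = (0::'e)"
    and "\<exists>c0 c1. c0 \<in> Fp \<and> c1 \<in> Fp \<and> irreducible_over Fp [:c0, c1, 1:] \<and> poly [:c0, c1, 1:] eta = 0"
    and "\<exists>b::'e. primitive_root_of_unity (2 * n) b"
    and "subspace_Fp n S" and "totally_isotropic n S"
    and "is_linear_code eta S" and "is_negacyclic n S"
    and "is_generator_poly eta n (dual_polys eta n S) g"
    and "is_bch_distance n g d"
  shows "\<forall>u \<in> symp_dual n S - S. d \<le> joint_weight n u"
proof
  fix u assume u: "u \<in> symp_dual n S - S"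
  have p0: "p > 0" using assms(1) by (simp add: prime_gt_0_nat)
  obtain c0 c1 where cc: "c0 \<in> Fp" "c1 \<in> Fp" "irreducible_over Fp [:c0, c1, 1:]" "poly [:c0, c1, 1:] eta = 0"
    using assms(6) by blast
  obtain l b where lb: "primitive_root_of_unity (2 * n) b"
      "\<And>j. j + 1 < d \<Longrightarrow> poly g (b ^ (l + 2 * j)) = 0"
    using assms(13) unfolding is_bch_distance_def bch_ok_def by blast
  have b0: "b \<noteq> 0"
  proof
    assume "b = 0" then show False using lb(1) assms(3) by (simp add: primitive_root_of_unity_def power_0_left)
  qed
  define w where "w = embed eta u"
  define h where "h = vpoly n w"
  have uv: "u \<in> vecs n \<times> vecs n" using u unfolding symp_dual_def by auto
  have "h \<in> dual_polys eta n S" unfolding h_def w_def dual_polys_def using u by blast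
  then have gh: "g dvd h" using assms(12) unfolding is_generator_poly_def by blast
  have ph: "\<And>x. poly h x = (\<Sum>i<n. w i * x ^ i)"
    by (simp add: h_def vpoly_def poly_sum poly_monom)
  have roots: "\<And>j. j + 1 < d \<Longrightarrow> poly h (b ^ (l + 2 * j)) = 0"
  proof -
    fix j assume "j + 1 < d"
    then have "poly g (b ^ (l + 2 * j)) = 0" by (rule lb(2))
    moreover obtain k where "h = g * k" using gh by (auto elim: dvdE)
    ultimately show "poly h (b ^ (l + 2 * j)) = 0" by simp
  qed
  define K where "K = {i. i < n \<and> w i \<noteq> 0}"
  have finK: "finite K" unfolding K_def by simp
  have inj: "inj_on (\<lambda>i. b ^ (2 * i)) K"
  proof (rule inj_onI)
    fix i i' assume "i \<in> K" "i' \<in> K" "b ^ (2 * i) = b ^ (2 * i')"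
    then show "i = i'" using root_pow_ne[OF lb(1), of i i'] root_pow_ne[OF lb(1), of i' i]
      unfolding K_def by (metis (mono_tags, lifting) linorder_neqE_nat mem_Collect_eq)
  qed
  have cardK: "d \<le> card K"
  proof (rule ccontr)
    assume "\<not> d \<le> card K"
    then have lt: "card K < d" by simp
    have eqs: "\<forall>j<card K. (\<Sum>i\<in>K. (w i * b ^ (l * i)) * (b ^ (2 * i)) ^ j) = 0"
    proof (intro allI impI)
      fix j assume "j < card K"
      then have "poly h (b ^ (l + 2 * j)) = 0" using lt by (intro roots) simp
      then have "(\<Sum>i<n. w i * (b ^ (l + 2 * j)) ^ i) = 0" by (simp add: ph)
      moreover have "(\<Sum>i<n. w i * (b ^ (l + 2 * j)) ^ i) = (\<Sum>i\<in>K. w i * (b ^ (l + 2 * j)) ^ i)"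
        by (rule sum.mono_neutral_right) (auto simp: K_def)
      moreover have "\<And>i. (b ^ (l + 2 * j)) ^ i = b ^ (l * i) * (b ^ (2 * i)) ^ j"
        by (simp add: power_mult[symmetric] power_add[symmetric] algebra_simps)
      ultimately show "(\<Sum>i\<in>K. (w i * b ^ (l * i)) * (b ^ (2 * i)) ^ j) = 0"
        by (simp add: mult.assoc)
    qed
    have "K = {}"
    proof (rule ccontr)
      assume "K \<noteq> {}"
      then obtain i0 where i0: "i0 \<in> K" by auto
      have "w i0 * b ^ (l * i0) = 0"
        by (rule vander0[OF finK inj eqs i0])
      then show False using i0 b0 unfolding K_def by simp
    qed
    then have w0: "\<And>i. i < n \<Longrightarrow> w i = 0" unfolding K_def by auto
    have "u = ((\<lambda>i. 0), (\<lambda>i. 0))"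
    proof -
      have "\<And>i. fst u i = 0 \<and> snd u i = 0"
      proof -
        fix i show "fst u i = 0 \<and> snd u i = 0"
        proof (cases "i < n")
          case True
          have "fst u i \<in> Fp" "snd u i \<in> Fp" using uv True unfolding vecs_def by auto
          moreover have "fst u i + eta * snd u i = 0" using w0[OF True] unfolding w_def embed_def .
          ultimately show ?thesis using eta_not_Fp[OF p0 assms(5) cc] by blast
        next
          case False then show ?thesis using uv unfolding vecs_def by auto
        qed
      qed
      then show ?thesis by (metis prod.collapse ext)
    qed
    moreover have "((\<lambda>i. 0), (\<lambda>i. 0)) \<in> S" using assms(8) unfolding subspace_Fp_def by blast
    ultimately show False using u by simp
  qed
  have "K \<subseteq> {j. j < n \<and> (fst u j \<noteq> 0 \<or> snd u j \<noteq> 0)}"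
    unfolding K_def w_def embed_def by auto
  then have "card K \<le> joint_weight n u" unfolding joint_weight_def by (rule card_mono[rotated]) simp
  then show "d \<le> joint_weight n u" using cardK by simp
qed

end
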